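(* Let $k\geq 4$ and let $G$ be a diregular $(2,k,+3)$-digraph. Let $u,v$ be distinct vertices with exactly one common out-neighbour $u_2$, write $N^+(u)=\{u_1,u_2\}$, $N^+(v)=\{v_1,u_2\}$, $N^+(u_1)=\{u_3,u_4\}$ and $N^+(v_1)=\{v_3,v_4\}$. Then $\{u_3,u_4\}\subseteq\{v_3,v_4\}\cup O(v)$ and $\{v_3,v_4\}\subseteq\{u_3,u_4\}\cup O(u)$.
   Context: A digraph is $k$-geodetic if for every ordered pair of vertices $x,y$ there is at most one directed path from $x$ to $y$ of length at most $k$ (the trivial path counts). A diregular $(2,k,+3)$-digraph is a $k$-geodetic digraph of order $1+2+\dots+2^k+3$ in which every vertex has in- and out-degree $2$. $N^+(x)$ is the set of out-neighbours of $x$. $d(x,y)$ is the directed distance; $O(x)=\{y: d(x,y)\geq k+1\}$ is the outlier set of $x$. *)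

theory Defs
  imports Main "HOL-Library.Extended_Nat"
begin

definition out_nbrs :: "('a \<times> 'a) set \<Rightarrow> 'a \<Rightarrow> 'a set" where
  "out_nbrs E x = {y. (x, y) \<in> E}"

definition in_nbrs :: "('a \<times> 'a) set \<Rightarrow> 'a \<Rightarrow> 'a set" where
  "in_nbrs E x = {y. (y, x) \<in> E}"

definition is_walk :: "('a \<times> 'a) set \<Rightarrow> 'a list \<Rightarrow> bool" where
  "is_walk E p \<longleftrightarrow> p \<noteq> [] \<and> (\<forall>i. Suc i < length p \<longrightarrow> (p ! i, p ! Suc i) \<in> E)"

definition walk_len :: "'a list \<Rightarrow> nat" where
  "walk_len p = length p - 1"

definition walks_from_to :: "('a \<times> 'a) set \<Rightarrow> 'a \<Rightarrow> 'a \<Rightarrow> 'a list set" where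
  "walks_from_to E x y = {p. is_walk E p \<and> hd p = x \<and> last p = y}"

definition digraph :: "'a set \<Rightarrow> ('a \<times> 'a) set \<Rightarrow> bool" where
  "digraph V E \<longleftrightarrow> finite V \<and> E \<subseteq> V \<times> V"

definition k_geodetic :: "'a set \<Rightarrow> ('a \<times> 'a) set \<Rightarrow> nat \<Rightarrow> bool" where
  "k_geodetic V E k \<longleftrightarrow>
     (\<forall>x\<in>V. \<forall>y\<in>V. \<forall>p\<in>walks_from_to E x y. \<forall>q\<in>walks_from_to E x y.
        walk_len p \<le> k \<longrightarrow> walk_len q \<le> k \<longrightarrow> p = q)"

definition diregular :: "'a set \<Rightarrow> ('a \<times> 'a) set \<Rightarrow> nat \<Rightarrow> bool" where
  "diregular V E d \<longleftrightarrow> (\<forall>x\<in>V. card (out_nbrs E x) = d \<and> card (in_nbrs E x) = d)"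

definition digraph_2_k_plus3 :: "'a set \<Rightarrow> ('a \<times> 'a) set \<Rightarrow> nat \<Rightarrow> bool" where
  "digraph_2_k_plus3 V E k \<longleftrightarrow>
     digraph V E \<and> diregular V E 2 \<and> k_geodetic V E k \<and>
     card V = (\<Sum>i\<le>k. (2::nat) ^ i) + 3"

text \<open>Directed distance (infinite if y is unreachable from x).\<close>
definition dist :: "('a \<times> 'a) set \<Rightarrow> 'a \<Rightarrow> 'a \<Rightarrow> enat" where
  "dist E x y = (INF p \<in> walks_from_to E x y. enat (walk_len p))"

definition outlier :: "'a set \<Rightarrow> ('a \<times> 'a) set \<Rightarrow> nat \<Rightarrow> 'a \<Rightarrow> 'a set" where
  "outlier V E k x = {y \<in> V. dist E x y \<ge> enat (k + 1)}"

end

theory Submission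
  imports Defs
begin



fun R :: "('a \<times> 'a) set \<Rightarrow> 'a \<Rightarrow> nat \<Rightarrow> 'a \<Rightarrow> bool" where
  "R E x 0 y = (x = y)"
| "R E x (Suc n) y = (\<exists>z. (x,z) \<in> E \<and> R E z n y)"

lemma R_trans: "R E x m z \<Longrightarrow> R E z n y \<Longrightarrow> R E x (m+n) y"
  by (induction m arbitrary: x) auto

lemma R_snoc: "R E x (Suc n) y \<longleftrightarrow> (\<exists>z. R E x n z \<and> (z,y) \<in> E)"
  by (induction n arbitrary: x) auto

lemma R_one: "R E x 1 y \<longleftrightarrow> (x,y) \<in> E"
  by simp

lemma R_walk: "R E x n y \<Longrightarrow> \<exists>p. is_walk E p \<and> hd p = x \<and> last p = y \<and> length p = Suc n"
proof (induction n arbitrary: x)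
  case 0 then show ?case by (intro exI[of _ "[x]"]) (auto simp: is_walk_def)
next
  case (Suc n)
  then obtain z where z: "(x,z) \<in> E" "R E z n y" by auto
  then obtain p where p: "is_walk E p" "hd p = z" "last p = y" "length p = Suc n" using Suc.IH by blast
  have "is_walk E (x#p)"
    unfolding is_walk_def
  proof (intro conjI allI impI)
    fix i assume "Suc i < length (x#p)"
    then show "((x#p) ! i, (x#p) ! Suc i) \<in> E"
      using p z by (cases i) (auto simp: is_walk_def hd_conv_nth)
  qed simp
  then show ?case using p by (intro exI[of _ "x#p"]) auto
qed

lemma walk_R: "is_walk E p \<Longrightarrow> R E (hd p) (length p - 1) (last p)"
proof (induction p)
  case Nil then show ?case by (simp add: is_walk_def)
next
  case (Cons a p)
  show ?case
  proof (cases "p = []")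
    case True then show ?thesis by simp
  next
    case False
    have e: "(a, hd p) \<in> E" using Cons.prems False
      unfolding is_walk_def by (metis hd_conv_nth length_Cons length_greater_0_conv nth_Cons_0 nth_Cons_Suc zero_less_Suc Suc_mono)
    have "is_walk E p" using Cons.prems False unfolding is_walk_def by fastforce
    then have "R E (hd p) (length p - 1) (last p)" using Cons.IH by blast
    then have "R E a (Suc (length p - 1)) (last p)" using e by auto
    then show ?thesis using False by simp
  qed
qed




definition cfg :: "'a set \<Rightarrow> ('a \<times> 'a) set \<Rightarrow> 'a \<Rightarrow> 'a \<Rightarrow> 'a \<Rightarrow> 'a \<Rightarrow> 'a \<Rightarrow> bool" where
  "cfg V E u v u1 v1 u2 \<longleftrightarrow> u \<in> V \<and> v \<in> V \<and> u \<noteq> v \<and> out_nbrs E u = {u1,u2} \<and>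
     out_nbrs E v = {v1,u2} \<and> out_nbrs E u \<inter> out_nbrs E v = {u2}"

lemma cfg_sym: "cfg V E u v u1 v1 u2 \<Longrightarrow> cfg V E v u v1 u1 u2"
  unfolding cfg_def by auto

locale G =
  fixes V :: "'a set" and E :: "('a \<times> 'a) set" and k :: nat
  assumes k4: "k \<ge> 4" and D: "digraph_2_k_plus3 V E k"
begin

lemma finV: "finite V" using D by (simp add: digraph_2_k_plus3_def digraph_def)
lemma EV: "E \<subseteq> V \<times> V" using D by (simp add: digraph_2_k_plus3_def digraph_def)
lemma deg: "x \<in> V \<Longrightarrow> card (out_nbrs E x) = 2"
  using D by (simp add: digraph_2_k_plus3_def diregular_def)
lemma geo: "k_geodetic V E k" using D by (simp add: digraph_2_k_plus3_def)
lemma cardV: "card V = (\<Sum>i\<le>k. (2::nat) ^ i) + 3" using D by (simp add: digraph_2_k_plus3_def)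

lemma R_V: "x \<in> V \<Longrightarrow> R E x n y \<Longrightarrow> y \<in> V"
  using EV by (induction n arbitrary: x) auto

lemma R_V1: "(x,y) \<in> E \<Longrightarrow> x \<in> V \<and> y \<in> V" using EV by auto

lemma geo_list:
  assumes "x \<in> V" "y \<in> V" "is_walk E p" "hd p = x" "last p = y" "length p \<le> Suc k"
    "is_walk E q" "hd q = x" "last q = y" "length q \<le> Suc k"
  shows "p = q"
  using geo assms unfolding k_geodetic_def walks_from_to_def walk_len_def by fastforce

lemma U1: assumes "x \<in> V" "R E x m y" "R E x n y" "m \<le> k" "n \<le> k" shows "m = n"
proof -
  have y: "y \<in> V" using assms R_V by blast
  obtain p where p: "is_walk E p" "hd p = x" "last p = y" "length p = Suc m" using R_walk assms by metis
  obtain q where q: "is_walk E q" "hd q = x" "last q = y" "length q = Suc n" using R_walk assms by metis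
  have "p = q" using geo_list[OF assms(1) y p(1-3) _ q(1-3)] p q assms by simp
  then show ?thesis using p q by simp
qed

lemma U2: assumes "(x,a) \<in> E" "(x,b) \<in> E" "R E a m y" "R E b n y" "m < k" "n < k" shows "a = b"
proof -
  have x: "x \<in> V" using assms R_V1 by blast
  have a: "a \<in> V" using assms R_V1 by blast
  have y: "y \<in> V" using assms R_V a by blast
  obtain p where p: "is_walk E p" "hd p = a" "last p = y" "length p = Suc m" using R_walk assms by metis
  obtain q where q: "is_walk E q" "hd q = b" "last q = y" "length q = Suc n" using R_walk assms by metis
  have "R E x (Suc m) y" "R E x (Suc n) y" using assms by auto
  obtain p' where p': "is_walk E p'" "hd p' = x" "last p' = y" "length p' = Suc (Suc m)" "p' = x # p"
  proof -
    have "is_walk E (x#p)" unfolding is_walk_def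
    proof (intro conjI allI impI)
      fix i assume "Suc i < length (x#p)"
      then show "((x#p) ! i, (x#p) ! Suc i) \<in> E"
        using p assms(1) by (cases i) (auto simp: is_walk_def hd_conv_nth)
    qed simp
    then show ?thesis using that p by (metis hd_Cons_tl last_ConsR length_Cons list.sel(1) list.size(3) nat.distinct(1))
  qed
  obtain q' where q': "is_walk E q'" "hd q' = x" "last q' = y" "length q' = Suc (Suc n)" "q' = x # q"
  proof -
    have "is_walk E (x#q)" unfolding is_walk_def
    proof (intro conjI allI impI)
      fix i assume "Suc i < length (x#q)"
      then show "((x#q) ! i, (x#q) ! Suc i) \<in> E"
        using q assms(2) by (cases i) (auto simp: is_walk_def hd_conv_nth)
    qed simp
    then show ?thesis using that q by (metis hd_Cons_tl last_ConsR length_Cons list.sel(1) list.size(3) nat.distinct(1))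
  qed
  have "p' = q'" using geo_list[OF x y p'(1-3) _ q'(1-3)] p' q' assms by simp
  then have "p = q" using p' q' by simp
  then show ?thesis using p q by simp
qed

lemma Cyc: "x \<in> V \<Longrightarrow> R E x n x \<Longrightarrow> 0 < n \<Longrightarrow> n \<le> k \<Longrightarrow> False"
  using U1[of x 0 x n] by simp

lemma out2: "x \<in> V \<Longrightarrow> \<exists>a b. out_nbrs E x = {a,b} \<and> a \<noteq> b"
  using deg card_2_iff by metis

lemma R_Suc_out: "R E x (Suc n) y \<longleftrightarrow> (\<exists>z\<in>out_nbrs E x. R E z n y)"
  by (auto simp: out_nbrs_def)

lemma fin_layer: "finite {y. R E x n y}" if "x \<in> V"
  using finV R_V[OF that] by (metis mem_Collect_eq rev_finite_subset subsetI)

lemma card_layer: "x \<in> V \<Longrightarrow> n \<le> k \<Longrightarrow> card {y. R E x n y} = 2 ^ n"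
proof (induction n arbitrary: x)
  case 0 then show ?case by simp
next
  case (Suc n)
  obtain a b where ab: "out_nbrs E x = {a,b}" "a \<noteq> b" using out2 Suc.prems by blast
  have aV: "a \<in> V" "b \<in> V" using ab R_V1 by (auto simp: out_nbrs_def)
  have eq: "{y. R E x (Suc n) y} = {y. R E a n y} \<union> {y. R E b n y}"
    using ab R_Suc_out[of x n] by auto
  have ea: "(x,a) \<in> E" "(x,b) \<in> E" using ab by (auto simp: out_nbrs_def)
  have disj: "{y. R E a n y} \<inter> {y. R E b n y} = {}"
    using U2[OF ea, of n _ n] ab Suc.prems by auto
  have "card {y. R E x (Suc n) y} = card {y. R E a n y} + card {y. R E b n y}"
    unfolding eq by (rule card_Un_disjoint[OF fin_layer fin_layer disj]) (use aV in auto)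
  then show ?case using Suc aV by simp
qed


definition T :: "'a \<Rightarrow> nat \<Rightarrow> 'a set" where
  "T x n = {y. \<exists>m\<le>n. R E x m y}"

lemma T_UN: "T x n = (\<Union>m\<in>{..n}. {y. R E x m y})"
  unfolding T_def by auto

lemma fin_T: "x \<in> V \<Longrightarrow> finite (T x n)"
  unfolding T_UN using fin_layer by auto

lemma T_V: "x \<in> V \<Longrightarrow> T x n \<subseteq> V"
  unfolding T_def using R_V by auto

lemma card_T: "x \<in> V \<Longrightarrow> n \<le> k \<Longrightarrow> card (T x n) = (\<Sum>m\<le>n. 2 ^ m)"
  unfolding T_UN
  apply (subst card_UN_disjoint)
  using fin_layer card_layer U1 by auto

lemma outlier_iff: "y \<in> outlier V E k x \<longleftrightarrow> y \<in> V \<and> (\<forall>n\<le>k. \<not> R E x n y)"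
proof -
  have "enat (k+1) \<le> dist E x y \<longleftrightarrow> (\<forall>n\<le>k. \<not> R E x n y)"
  proof
    assume a: "enat (k+1) \<le> dist E x y"
    show "\<forall>n\<le>k. \<not> R E x n y"
    proof (intro allI impI notI)
      fix n assume "n \<le> k" "R E x n y"
      then obtain p where p: "is_walk E p" "hd p = x" "last p = y" "length p = Suc n" using R_walk by metis
      then have "p \<in> walks_from_to E x y" by (simp add: walks_from_to_def)
      then have "enat (k+1) \<le> enat (walk_len p)" using a unfolding dist_def by (simp add: le_INF_iff)
      then show False using p \<open>n \<le> k\<close> by (simp add: walk_len_def)
    qed
  next
    assume a: "\<forall>n\<le>k. \<not> R E x n y"
    show "enat (k+1) \<le> dist E x y" unfolding dist_def le_INF_iff
    proof
      fix p assume "p \<in> walks_from_to E x y"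
      then have "is_walk E p" "hd p = x" "last p = y" by (auto simp: walks_from_to_def)
      then have "R E x (length p - 1) y" using walk_R by metis
      then have "\<not> length p - 1 \<le> k" using a by blast
      then show "enat (k+1) \<le> enat (walk_len p)" by (auto simp: walk_len_def)
    qed
  qed
  then show ?thesis unfolding outlier_def by auto
qed

lemma outlier_eq: "outlier V E k x = V - T x k"
  using outlier_iff unfolding T_def by blast

lemma card_outlier: "x \<in> V \<Longrightarrow> card (outlier V E k x) = 3"
  unfolding outlier_eq using card_Diff_subset[OF fin_T T_V] card_T[of x k] cardV by simp

lemma fin_outlier: "finite (outlier V E k x)"
  unfolding outlier_eq using finV by simp

end


context G begin

lemma cfg_basic:
  assumes "cfg V E u v u1 v1 u2"
  shows "u \<in> V" "v \<in> V" "(u,u1) \<in> E" "(u,u2) \<in> E" "(v,v1) \<in> E" "(v,u2) \<in> E"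
    "u1 \<noteq> u2" "v1 \<noteq> u2" "u1 \<noteq> v1" "u1 \<in> V" "v1 \<in> V" "u2 \<in> V" "u \<noteq> v"
    "out_nbrs E u = {u1,u2}" "out_nbrs E v = {v1,u2}"
proof -
  show uV: "u \<in> V" and vV: "v \<in> V" and "u \<noteq> v" using assms by (auto simp: cfg_def)
  show o1: "out_nbrs E u = {u1,u2}" and o2: "out_nbrs E v = {v1,u2}" using assms by (auto simp: cfg_def)
  show e: "(u,u1) \<in> E" "(u,u2) \<in> E" "(v,v1) \<in> E" "(v,u2) \<in> E"
    using o1 o2 by (auto simp: out_nbrs_def)
  show "u1 \<noteq> u2" using deg[OF uV] o1 by auto
  show "v1 \<noteq> u2" using deg[OF vV] o2 by auto
  show "u1 \<noteq> v1" using assms \<open>u1 \<noteq> u2\<close> unfolding cfg_def by auto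
  show "u1 \<in> V" "v1 \<in> V" "u2 \<in> V" using e R_V1 by auto
qed

lemma H:
  assumes c: "cfg V E u v u1 v1 u2" and r: "R E v1 m u" and m: "m + 2 \<le> k"
  shows False
proof -
  note b = cfg_basic[OF c]
  have "R E u 1 u2" using b by simp
  then have "R E v1 (m+1) u2" using R_trans[OF r] by blast
  then have "R E v (Suc (m+1)) u2" using b by auto
  moreover have "R E v 1 u2" using b by simp
  ultimately show False using U1[OF b(2), of "Suc (m+1)" u2 1] m by simp
qed

lemma DiffSub:
  assumes c: "cfg V E u v u1 v1 u2"
  shows "T u1 (k-1) - T v1 (k-1) \<subseteq> insert v (outlier V E k v)"
proof
  note b = cfg_basic[OF c]
  fix w assume w: "w \<in> T u1 (k-1) - T v1 (k-1)"
  then obtain i where i: "i \<le> k-1" "R E u1 i w" by (auto simp: T_def)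
  have wV: "w \<in> V" using R_V[OF b(10) i(2)] .
  show "w \<in> insert v (outlier V E k v)"
  proof (rule ccontr)
    assume "w \<notin> insert v (outlier V E k v)"
    then obtain n where n: "n \<le> k" "R E v n w" "w \<noteq> v" using outlier_iff wV by auto
    then obtain n' where n': "n = Suc n'" by (cases n) auto
    then obtain z where z: "z \<in> {v1,u2}" "R E z n' w" using n b R_Suc_out[of v n' w] by auto
    show False
    proof (cases "z = v1")
      case True then show ?thesis using w z n n' by (auto simp: T_def)
    next
      case False
      then have "R E u2 n' w" using z by auto
      then have "u2 = u1" using U2[OF b(4) b(3) _ i(2)] n n' i k4 by auto
      then show ?thesis using b by auto
    qed
  qed
qed

lemma card_ins: "v \<in> V \<Longrightarrow> card (insert v (outlier V E k v)) \<le> 4"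
  using card_insert_le_m1[of 4 "outlier V E k v" v] card_outlier fin_outlier
  by (simp add: card_insert_if)

lemma card_cmp:
  assumes c: "cfg V E u v u1 v1 u2"
  shows "card (T u1 (k-1) - T v1 (k-1)) = card (T v1 (k-1) - T u1 (k-1))"
proof -
  note b = cfg_basic[OF c]
  have f: "finite (T u1 (k-1))" "finite (T v1 (k-1))" using fin_T b by auto
  have "card (T u1 (k-1)) = card (T v1 (k-1))" using card_T b by simp
  then show ?thesis using card_Diff_subset_Int f by (metis Int_commute finite_Int)
qed

lemma step1:
  assumes c: "cfg V E u v u1 v1 u2" and x: "x \<in> out_nbrs E u1" and xo: "x \<notin> outlier V E k v"
  shows "\<exists>j\<le>k-1. R E v1 j x"
proof -
  note b = cfg_basic[OF c]
  have ex: "(u1,x) \<in> E" using x by (simp add: out_nbrs_def)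
  have xV: "x \<in> V" using ex R_V1 by auto
  obtain n where n: "n \<le> k" "R E v n x" using outlier_iff xV xo by auto
  show ?thesis
  proof (cases n)
    case 0
    then have "R E u1 1 v" using n ex by auto
    then show ?thesis using H[OF cfg_sym[OF c], of 1] k4 by auto
  next
    case (Suc n')
    then obtain z where z: "z \<in> {v1,u2}" "R E z n' x" using n b R_Suc_out[of v n' x] by auto
    show ?thesis
    proof (cases "z = v1")
      case True then show ?thesis using z n Suc by (intro exI[of _ n']) auto
    next
      case False
      then have "R E u2 n' x" using z by auto
      moreover have "R E u1 1 x" using ex by simp
      ultimately have "u2 = u1" using U2[OF b(4) b(3), of n' x 1] n Suc k4 by auto
      then show ?thesis using b by auto
    qed
  qed
qed

end


context G begin

lemma inT: "R E z m w \<Longrightarrow> m \<le> n \<Longrightarrow> w \<in> T z n"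
  unfolding T_def by auto

lemma far: "z \<in> V \<Longrightarrow> R E z k w \<Longrightarrow> w \<notin> T z (k-1)"
  unfolding T_def using U1[of z k w] k4 by fastforce

lemma pow4: "2 \<le> t \<Longrightarrow> (4::nat) \<le> 2 ^ t"
  using power_increasing[of 2 t "2::nat"] by simp

lemma fin_diff: "z \<in> V \<Longrightarrow> finite (T z n - X)" using fin_T by auto

lemma L_u1:
  assumes c: "cfg V E u v u1 v1 u2" and ex: "(u1,x) \<in> E" and j: "R E v1 j x" "j \<le> k-1"
    and i: "R E v1 i u1" "i \<le> k-1"
  shows False
proof -
  note b = cfg_basic[OF c]
  have "R E v1 (i+1) x" using R_trans[OF i(1), of 1 x] ex by simp
  then have ij: "i+1 = j" using U1[OF b(11) _ j(1)] j k4 i by simp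
  have i0: "i \<noteq> 0" using i b by auto
  define S where "S = {w. R E u1 (k-i) w}"
  have cS: "card S = 2^(k-i)" unfolding S_def using card_layer b ij j by simp
  have S4: "4 \<le> card S" unfolding cS using pow4 ij j by simp
  have "S \<subseteq> T u1 (k-1) - T v1 (k-1)"
  proof
    fix w assume "w \<in> S"
    then have w: "R E u1 (k-i) w" by (simp add: S_def)
    have "R E v1 (i + (k-i)) w" using R_trans[OF i(1) w] .
    then have "R E v1 k w" using ij j by simp
    then show "w \<in> T u1 (k-1) - T v1 (k-1)" using far[OF b(11)] inT[OF w] i0 by auto
  qed
  then have "4 \<le> card (T u1 (k-1) - T v1 (k-1))"
    using S4 card_mono[OF fin_diff[OF b(10)]] by (meson le_trans)
  then have c4: "4 \<le> card (T v1 (k-1) - T u1 (k-1))" using card_cmp[OF c] by simp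
  have sub: "T v1 (k-1) - T u1 (k-1) \<subseteq> insert u (outlier V E k u)" using DiffSub[OF cfg_sym[OF c]] .
  have "T v1 (k-1) - T u1 (k-1) = insert u (outlier V E k u)"
    using card_seteq[OF _ sub] fin_outlier card_ins[OF b(1)] c4 by simp
  then have "u \<in> T v1 (k-1)" by auto
  then obtain m where m: "m \<le> k-1" "R E v1 m u" by (auto simp: T_def)
  have mk: "m = k-1" using H[OF c m(2)] m k4 by (cases "m + 2 \<le> k") auto
  have "R E v1 (m+1) u1" using R_trans[OF m(2), of 1 u1] b by simp
  then have "m+1 = i" using U1[OF b(11) _ i(1)] mk i k4 by simp
  then show False using mk ij j by simp
qed

lemma L0:
  assumes c: "cfg V E u v u1 v1 u2" and ex: "(u1,v1) \<in> E"
  shows False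
proof -
  note b = cfg_basic[OF c]
  define S where "S = {w. R E v1 (k-1) w}"
  have cS: "card S = 2^(k-1)" unfolding S_def using card_layer b by simp
  have S4: "8 \<le> card S" unfolding cS using power_increasing[of 3 "k-1" "2::nat"] k4 by simp
  have "S \<subseteq> T v1 (k-1) - T u1 (k-1)"
  proof
    fix w assume "w \<in> S"
    then have w: "R E v1 (k-1) w" by (simp add: S_def)
    have "R E u1 (1 + (k-1)) w" using R_trans[OF _ w, of u1 1] ex by simp
    then have "R E u1 k w" using k4 by simp
    then show "w \<in> T v1 (k-1) - T u1 (k-1)" using far[OF b(10)] inT[OF w] by auto
  qed
  then have "8 \<le> card (T v1 (k-1) - T u1 (k-1))"
    using S4 card_mono[OF fin_diff[OF b(11)]] by (meson le_trans)
  moreover have "card (T v1 (k-1) - T u1 (k-1)) \<le> 4"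
    using card_mono[OF _ DiffSub[OF cfg_sym[OF c]]] card_ins[OF b(1)] fin_outlier by (meson finite_insert le_trans)
  ultimately show False by simp
qed

lemma Lmid:
  assumes c: "cfg V E u v u1 v1 u2" and ex: "(u1,x) \<in> E" and j: "R E v1 j x" "2 \<le> j" "j + 2 \<le> k"
    and nb: "u1 \<notin> T v1 (k-1)"
  shows False
proof -
  note b = cfg_basic[OF c]
  have xV: "x \<in> V" using ex R_V1 by auto
  define S where "S = {w. R E x (k-j) w}"
  have cS: "card S = 2^(k-j)" unfolding S_def using card_layer xV by simp
  have S4: "4 \<le> card S" unfolding cS using pow4 j by simp
  have fS: "finite S" unfolding S_def using fin_layer xV by simp
  have u1S: "u1 \<notin> S"
  proof
    assume "u1 \<in> S"
    then have "R E x (k-j) u1" by (simp add: S_def)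
    then have r: "R E u1 (Suc (k-j)) u1" using ex by auto
    have "Suc (k-j) \<le> k" using j by linarith
    then show False using Cyc[OF b(10) r] by simp
  qed
  have "insert u1 S \<subseteq> T u1 (k-1) - T v1 (k-1)"
  proof
    fix w assume "w \<in> insert u1 S"
    then show "w \<in> T u1 (k-1) - T v1 (k-1)"
    proof
      assume "w = u1" then show ?thesis using nb inT[of u1 0 u1] by auto
    next
      assume "w \<in> S"
      then have w: "R E x (k-j) w" by (simp add: S_def)
      have w1: "R E u1 (Suc (k-j)) w" using w ex by auto
      have "R E v1 (j + (k-j)) w" using R_trans[OF j(1) w] .
      then have "R E v1 k w" using j by simp
      then show ?thesis using far[OF b(11)] inT[OF w1, of "k-1"] j by auto
    qed
  qed
  then have "5 \<le> card (T u1 (k-1) - T v1 (k-1))"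
  proof -
    have "card (insert u1 S) = Suc (card S)" using card_insert_disjoint[OF fS u1S] .
    then have "5 \<le> card (insert u1 S)" using S4 by simp
    then show ?thesis using card_mono[OF fin_diff[OF b(10)] \<open>insert u1 S \<subseteq> _\<close>] by simp
  qed
  moreover have "card (T u1 (k-1) - T v1 (k-1)) \<le> 4"
    using card_mono[OF _ DiffSub[OF c]] card_ins[OF b(2)] fin_outlier by (meson finite_insert le_trans)
  ultimately show False by simp
qed

lemma Ldeep:
  assumes c: "cfg V E u v u1 v1 u2" and ex: "(u1,x) \<in> E" and j: "R E v1 (k-1) x"
    and nb: "u1 \<notin> T v1 (k-1)"
  shows "outlier V E k v = insert u1 (out_nbrs E x)"
proof -
  note b = cfg_basic[OF c]
  have xV: "x \<in> V" using ex R_V1 by auto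
  have notv: "w \<noteq> v" if "R E u1 m w" "m + 2 \<le> k" for w m
    using H[OF cfg_sym[OF c]] that by blast
  have sub: "insert u1 (out_nbrs E x) \<subseteq> outlier V E k v"
  proof
    fix w assume "w \<in> insert u1 (out_nbrs E x)"
    then show "w \<in> outlier V E k v"
    proof
      assume "w = u1"
      then show ?thesis using DiffSub[OF c] nb inT[of u1 0 u1] notv[of 0 u1] k4 by auto
    next
      assume "w \<in> out_nbrs E x"
      then have "(x,w) \<in> E" by (simp add: out_nbrs_def)
      then have w2: "R E u1 2 w" using ex by (auto simp: numeral_eq_Suc)
      have "R E v1 (k-1+1) w" using R_trans[OF j, of 1 w] \<open>(x,w) \<in> E\<close> by simp
      then have "R E v1 k w" using k4 by simp
      have "w \<in> T u1 (k-1)" using inT[OF w2, of "k-1"] k4 by simp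
      moreover have "w \<notin> T v1 (k-1)" using far[OF b(11) \<open>R E v1 k w\<close>] .
      ultimately have "w \<in> insert v (outlier V E k v)" using DiffSub[OF c] by blast
      then show ?thesis using notv[OF w2] k4 by auto
    qed
  qed
  have nin: "u1 \<notin> out_nbrs E x"
  proof
    assume "u1 \<in> out_nbrs E x"
    then have "R E u1 2 u1" using ex by (auto simp: numeral_eq_Suc out_nbrs_def)
    then show False using Cyc[OF b(10), of 2] k4 by simp
  qed
  have "card (insert u1 (out_nbrs E x)) = 3"
    using deg[OF xV] nin card_insert_disjoint by (metis card.infinite eval_nat_numeral(3) zero_neq_numeral)
  then show ?thesis using card_seteq[OF fin_outlier sub] card_outlier[OF b(2)] by simp
qed

end


context G begin

lemma dd: "R E v1 a w \<Longrightarrow> R E v1 b w \<Longrightarrow> a \<le> k \<Longrightarrow> b \<le> k \<Longrightarrow> v1 \<in> V \<Longrightarrow> a = b"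
  using U1 by blast

lemma ddne: "R E v1 a w \<Longrightarrow> R E v1 b w' \<Longrightarrow> a \<noteq> b \<Longrightarrow> a \<le> k \<Longrightarrow> b \<le> k \<Longrightarrow> v1 \<in> V \<Longrightarrow> w \<noteq> w'"
  using U1 by blast

lemma Lfinal:
  assumes c: "cfg V E u v u1 v1 u2" and ox: "out_nbrs E u1 = {x,x'}" "x \<noteq> x'"
    and j: "R E v1 (k-1) x" and ex': "(v1,x') \<in> E" and nb: "u1 \<notin> T v1 (k-1)"
    and uo: "u \<notin> outlier V E k v"
  shows False
proof -
  note b = cfg_basic[OF c]
  have ex: "(u1,x) \<in> E" "(u1,x') \<in> E" using ox by (auto simp: out_nbrs_def)
  have v1V: "v1 \<in> V" using b by simp
  have ru: "R E v1 (k-1) u"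
  proof -
    obtain n where n: "n \<le> k" "R E v n u" using uo outlier_iff b by auto
    show ?thesis
    proof (cases n)
      case 0 then show ?thesis using n b by auto
    next
      case (Suc n')
      then obtain z where z: "z \<in> {v1,u2}" "R E z n' u" using n b R_Suc_out[of v n' u] by auto
      show ?thesis
      proof (cases "z = v1")
        case True
        then have r: "R E v1 n' u" using z by simp
        have "\<not> n' + 2 \<le> k" using H[OF c r] by blast
        moreover have "n' = k-1" using calculation n Suc by arith
        ultimately show ?thesis using r by simp
      next
        case False
        then have "R E u2 n' u" using z by simp
        then have r: "R E u (Suc n') u" using b by auto
        show ?thesis using Cyc[OF b(1) r] n Suc by simp
      qed
    qed
  qed
  obtain y where oy: "out_nbrs E v1 = {x', y}" "y \<noteq> x'"
  proof -
    obtain a1 a2 where "out_nbrs E v1 = {a1,a2}" "a1 \<noteq> a2" using out2[OF v1V] by blast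
    moreover have "x' \<in> out_nbrs E v1" using ex' by (simp add: out_nbrs_def)
    ultimately show ?thesis using that by (metis empty_iff insert_commute insert_iff)
  qed
  have ey: "(v1,y) \<in> E" using oy by (auto simp: out_nbrs_def)
  have ry: "R E y (k-2) x"
  proof -
    have e: "Suc (k-2) = k-1" using k4 by arith
    have "R E v1 (Suc (k-2)) x" by (simp only: e j)
    then obtain z where z: "z \<in> {x',y}" "R E z (k-2) x" using oy R_Suc_out[of v1 "k-2" x] by auto
    show ?thesis
    proof (cases "z = x'")
      case True
      then have r: "R E u1 (Suc (k-2)) x" using z ex by auto
      have r1: "R E u1 1 x" using ex by simp
      have "Suc (k-2) = 1" by (rule U1[OF b(10) r r1]) (use k4 in arith)+
      then show ?thesis using k4 by arith
    next
      case False then show ?thesis using z by simp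
    qed
  qed
  obtain p where p: "R E y (k-3) p" "(p,x) \<in> E"
  proof -
    have e: "Suc (k-3) = k-2" using k4 by arith
    have "R E y (Suc (k-3)) x" by (simp only: e ry)
    then show ?thesis using that R_snoc[of E y "k-3" x] by blast
  qed
  have rp: "R E v1 (k-2) p"
  proof -
    have "R E v1 (Suc (k-3)) p" using p ey by auto
    moreover have e: "Suc (k-3) = k-2" using k4 by arith
    ultimately show ?thesis by (simp only: e)
  qed
  have rv1: "R E v1 0 v1" by simp
  have ryy: "R E v1 1 y" using ey by simp
  have pA: "p \<notin> T u1 (k-1)"
  proof
    assume "p \<in> T u1 (k-1)"
    then obtain i where i: "i \<le> k-1" "R E u1 i p" by (auto simp: T_def)
    have r: "R E u1 (i+1) x" using R_trans[OF i(2), of 1 x] p by simp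
    have r1: "R E u1 1 x" using ex by simp
    have "i + 1 = 1" by (rule U1[OF b(10) r r1]) (use i k4 in arith)+
    then have "p = u1" using i by simp
    then show False using nb inT[OF rp] by simp
  qed
  have v1A: "v1 \<notin> T u1 (k-1)"
  proof
    assume "v1 \<in> T u1 (k-1)"
    then obtain i where i: "i \<le> k-1" "R E u1 i v1" by (auto simp: T_def)
    have r: "R E u1 (i+1) x'" using R_trans[OF i(2), of 1 x'] ex' by simp
    have r1: "R E u1 1 x'" using ex by simp
    have "i + 1 = 1" by (rule U1[OF b(10) r r1]) (use i k4 in arith)+
    then have "v1 = u1" using i by simp
    then show False using b by simp
  qed
  have uA: "u \<notin> T u1 (k-1)"
  proof
    assume "u \<in> T u1 (k-1)"
    then obtain i where i: "i \<le> k-1" "R E u1 i u" by (auto simp: T_def)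
    have r: "R E u (Suc i) u" using i b by auto
    have "Suc i \<le> k" using i k4 by arith
    then show False using Cyc[OF b(1) r] by simp
  qed
  define BA where "BA = T v1 (k-1) - T u1 (k-1)"
  have fBA: "finite BA" unfolding BA_def using fin_diff v1V by simp
  have cBA: "card BA \<le> 4"
    unfolding BA_def using card_mono[OF _ DiffSub[OF cfg_sym[OF c]]] card_ins[OF b(1)] fin_outlier by (meson finite_insert le_trans)
  have inBA: "w \<in> BA" if "R E v1 m w" "m \<le> k-1" "w \<notin> T u1 (k-1)" for w m
    unfolding BA_def using inT[OF that(1-2)] that(3) by simp
  have v1BA: "v1 \<in> BA" using inBA[OF rv1] v1A by simp
  have pBA: "p \<in> BA" using inBA[OF rp] pA by simp
  have uBA: "u \<in> BA" using inBA[OF ru] uA by simp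
  have d1: "v1 \<noteq> p" using dd[OF rv1, of "k-2"] rp v1V k4 by auto
  have d2: "v1 \<noteq> u" using dd[OF rv1, of "k-1"] ru v1V k4 by auto
  have d3: "p \<noteq> u" using dd[OF rp, of "k-1"] ru v1V k4 by auto
  have farA: "w \<notin> T u1 (k-1)" if "R E u1 k w" for w using far[OF b(10) that] .
  show False
  proof (cases "y \<in> T u1 (k-1)")
    case True
    then obtain i where i: "i \<le> k-1" "R E u1 i y" by (auto simp: T_def)
    show False
    proof (cases i)
      case 0 then show False using i nb inT[OF ryy] k4 by simp
    next
      case (Suc i')
      then obtain z where z: "z \<in> {x,x'}" "R E z i' y" using i ox R_Suc_out[of u1 i' y] by auto
      show False
      proof (cases "z = x'")
        case True
        then have "x' = y" using U2[OF ex' ey, of i' y 0] z i Suc k4 by simp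
        then show False using oy by simp
      next
        case False
        then have rxy: "R E x i' y" using z by simp
        have "R E y (k-2+i') y" using R_trans[OF ry rxy] .
        then have i3: "3 \<le> i'"
        proof -
          assume r: "R E y (k-2+i') y"
          have yV: "y \<in> V" using R_V[OF v1V ryy] .
          have "\<not> (0 < k-2+i' \<and> k-2+i' \<le> k)" using Cyc[OF yV r] by auto
          then show ?thesis using k4 by arith
        qed
        define t where "t = k-1-i'"
        have t11: "1 \<le> t" using i Suc i3 k4 unfolding t_def by arith
        have t12: "Suc t \<le> k-3" using i Suc i3 k4 unfolding t_def by arith
        have t13: "Suc i' + t = k" using i Suc i3 k4 unfolding t_def by arith
        note t1 = t11 t12 t13
        define S where "S = {w. R E y t w}"
        have yV: "y \<in> V" using R_V[OF v1V ryy] .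
        have cS: "card S = 2^t" unfolding S_def using card_layer yV t1 by simp
        have S2: "2 \<le> card S" unfolding cS using power_increasing[of 1 t "2::nat"] t1 by simp
        have fS: "finite S" unfolding S_def using fin_layer yV by simp
        have SBA: "S \<subseteq> BA"
        proof
          fix w assume "w \<in> S"
          then have w: "R E y t w" by (simp add: S_def)
          have r1: "R E v1 (Suc t) w" using w ey by auto
          have r3: "R E u1 (Suc i' + t) w" using R_trans[OF i(2) w] Suc by simp
          have "R E u1 k w" using r3 t1(3) by metis
          then have "w \<notin> T u1 (k-1)" using farA by simp
          then show "w \<in> BA" using inBA[OF r1] t1 by simp
        qed
        have disj: "{v1,p,u} \<inter> S = {}"
        proof -
          have "w \<notin> {v1,p,u}" if "w \<in> S" for w
          proof -
            have r1: "R E v1 (Suc t) w" using that ey by (auto simp: S_def)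
            have "w \<noteq> v1" by (rule ddne[OF r1 rv1]) (use t1 k4 v1V in arith)+
            moreover have "w \<noteq> p" by (rule ddne[OF r1 rp]) (use t1 k4 v1V in arith)+
            moreover have "w \<noteq> u" by (rule ddne[OF r1 ru]) (use t1 k4 v1V in arith)+
            ultimately show ?thesis by simp
          qed
          then show ?thesis by blast
        qed
        have "card ({v1,p,u} \<union> S) = 3 + card S"
          using card_Un_disjoint[OF _ fS disj] d1 d2 d3 by simp
        moreover have "card ({v1,p,u} \<union> S) \<le> card BA"
          using card_mono[OF fBA] SBA v1BA pBA uBA by simp
        ultimately show False using S2 cBA by simp
      qed
    qed
  next
    case False
    have yBA: "y \<in> BA" using inBA[OF ryy] False k4 by simp
    have d41: "y \<noteq> v1" by (rule ddne[OF ryy rv1]) (use k4 v1V in arith)+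
    have d42: "y \<noteq> p" by (rule ddne[OF ryy rp]) (use k4 v1V in arith)+
    have d43: "y \<noteq> u" by (rule ddne[OF ryy ru]) (use k4 v1V in arith)+
    note d4 = d41 d42 d43
    have Q: "{v1,p,u,y} \<subseteq> BA" using v1BA pBA uBA yBA by simp
    have cQ: "card {v1,p,u,y} = 4" using d1 d2 d3 d4 by auto
    have BAeq: "BA = {v1,p,u,y}" using card_seteq[OF fBA Q] cQ cBA by simp
    have yV: "y \<in> V" using R_V[OF v1V ryy] .
    obtain b2 where b2: "(y,b2) \<in> E" "R E b2 (k-3) x"
    proof -
      have e: "Suc (k-3) = k-2" using k4 by arith
      have "R E y (Suc (k-3)) x" by (simp only: e ry)
      then show ?thesis using that by auto
    qed
    obtain y' where y': "(y,y') \<in> E" "y' \<noteq> b2"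
    proof -
      obtain a1 a2 where "out_nbrs E y = {a1,a2}" "a1 \<noteq> a2" using out2[OF yV] by blast
      then show ?thesis using that by (auto simp: out_nbrs_def)
    qed
    have ry': "R E v1 2 y'" using ey y' by (auto simp: numeral_eq_Suc)
    have y'p: "y' \<noteq> p"
    proof
      assume "y' = p"
      then have "R E y' 1 x" using p by simp
      have "b2 = y'" by (rule U2[OF b2(1) y'(1) b2(2) \<open>R E y' 1 x\<close>]) (use k4 in arith)+
      then show False using y' by simp
    qed
    have "y' \<noteq> v1" by (rule ddne[OF ry' rv1]) (use k4 v1V in arith)+
    moreover have "y' \<noteq> u" by (rule ddne[OF ry' ru]) (use k4 v1V in arith)+
    moreover have "y' \<noteq> y" by (rule ddne[OF ry' ryy]) (use k4 v1V in arith)+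
    ultimately have y'Q: "y' \<notin> {v1,p,u,y}" using y'p by simp
    have "2 \<le> k-1" using k4 by arith
    then have y'A: "y' \<in> T u1 (k-1)"
      using inBA[OF ry'] y'Q BAeq by auto
    then obtain i where i: "i \<le> k-1" "R E u1 i y'" by (auto simp: T_def)
    show False
    proof (cases i)
      case 0 then show False using i nb inT[OF ry'] k4 by simp
    next
      case (Suc i')
      then obtain z where z: "z \<in> {x,x'}" "R E z i' y'" using i ox R_Suc_out[of u1 i' y'] by auto
      show False
      proof (cases "z = x'")
        case True
        have "R E y 1 y'" using y' by simp
        then have "x' = y" using U2[OF ex' ey, of i' y' 1] z True i Suc k4 by simp
        then show False using oy by simp
      next
        case False
        then have rxy: "R E x i' y'" using z by simp
        have r2: "R E b2 (k-3+i') y'" using R_trans[OF b2(2) rxy] .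
        have i3: "3 \<le> i'"
        proof (rule ccontr)
          assume "\<not> 3 \<le> i'"
          then have "b2 = y'" using U2[OF b2(1) y'(1) r2, of 0] k4 by simp
          then show False using y' by simp
        qed
        define t where "t = k-1-i'"
        have t11: "1 \<le> t" using i Suc i3 k4 unfolding t_def by arith
        have t12: "2 + t \<le> k-2" using i Suc i3 k4 unfolding t_def by arith
        have t13: "Suc i' + t = k" using i Suc i3 k4 unfolding t_def by arith
        note t1 = t11 t12 t13
        have y'V: "y' \<in> V" using R_V[OF v1V ry'] .
        define S where "S = {w. R E y' t w}"
        have cS: "card S = 2^t" unfolding S_def using card_layer y'V t1 by simp
        have S2: "2 \<le> card S" unfolding cS using power_increasing[of 1 t "2::nat"] t1 by simp
        have "S \<subseteq> {p}"
        proof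
          fix w assume "w \<in> S"
          then have w: "R E y' t w" by (simp add: S_def)
          have r1: "R E v1 (2 + t) w" using R_trans[OF ry' w] .
          have r3: "R E u1 (Suc i' + t) w" using R_trans[OF i(2) w] Suc by simp
          have "R E u1 k w" using r3 t1(3) by metis
          then have "w \<notin> T u1 (k-1)" using farA by simp
          then have "w \<in> {v1,p,u,y}" using inBA[OF r1] t1 BAeq by simp
          moreover have "w \<noteq> v1" by (rule ddne[OF r1 rv1]) (use t1 k4 v1V in arith)+
          moreover have "w \<noteq> u" by (rule ddne[OF r1 ru]) (use t1 k4 v1V in arith)+
          moreover have "w \<noteq> y" by (rule ddne[OF r1 ryy]) (use t1 k4 v1V in arith)+
          ultimately show "w \<in> {p}" by simp
        qed
        then have "card S \<le> 1" using card_mono[of "{p}" S] by simp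
        then show False using S2 by simp
      qed
    qed
  qed
qed

end


context G begin

lemma deep:
  assumes c: "cfg V E u v u1 v1 u2" and ex: "(u1,x) \<in> E" and nx: "(v1,x) \<notin> E"
    and xo: "x \<notin> outlier V E k v"
  shows "R E v1 (k-1) x \<and> u1 \<notin> T v1 (k-1)"
proof -
  note b = cfg_basic[OF c]
  have "x \<in> out_nbrs E u1" using ex by (simp add: out_nbrs_def)
  then obtain j where j: "j \<le> k-1" "R E v1 j x" using step1[OF c _ xo] by blast
  have nb: "u1 \<notin> T v1 (k-1)"
  proof
    assume "u1 \<in> T v1 (k-1)"
    then obtain i where "i \<le> k-1" "R E v1 i u1" by (auto simp: T_def)
    then show False using L_u1[OF c ex j(2) j(1)] by blast
  qed
  show ?thesis
  proof (cases "j = 0")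
    case True
    then have "x = v1" using j by simp
    then show ?thesis using L0[OF c] ex by blast
  next
    case False
    show ?thesis
    proof (cases "j = 1")
      case True then show ?thesis using j nx by simp
    next
      case False
      show ?thesis
      proof (cases "j + 2 \<le> k")
        case True
        have "2 \<le> j" using False \<open>j \<noteq> 0\<close> by arith
        then show ?thesis using Lmid[OF c ex j(2) _ True nb] by blast
      next
        case False
        then have "j = k-1" using j by arith
        then show ?thesis using j nb by simp
      qed
    qed
  qed
qed

lemma core:
  assumes c: "cfg V E u v u1 v1 u2" and ex: "(u1,x) \<in> E" and nx: "(v1,x) \<notin> E"
    and xo: "x \<notin> outlier V E k v"
  shows False
proof -
  note b = cfg_basic[OF c]
  have d0: "R E v1 (k-1) x \<and> u1 \<notin> T v1 (k-1)" by (rule deep[OF assms])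
  have d: "R E v1 (k-1) x" "u1 \<notin> T v1 (k-1)" using d0 by simp_all
  have O: "outlier V E k v = insert u1 (out_nbrs E x)" using Ldeep[OF c ex d] .
  obtain x' where ox: "out_nbrs E u1 = {x,x'}" "x \<noteq> x'"
  proof -
    obtain a1 a2 where a: "out_nbrs E u1 = {a1,a2}" "a1 \<noteq> a2" using out2 b(10) by blast
    have "x \<in> out_nbrs E u1" using ex by (simp add: out_nbrs_def)
    then have "x = a1 \<or> x = a2" using a by simp
    then show ?thesis
    proof
      assume "x = a1" then show ?thesis using that[of a2] a by simp
    next
      assume "x = a2" then show ?thesis using that[of a1] a by (simp add: insert_commute)
    qed
  qed
  have ex': "(u1,x') \<in> E" using ox by (auto simp: out_nbrs_def)
  have x'o: "x' \<notin> outlier V E k v"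
  proof
    assume "x' \<in> outlier V E k v"
    then have "x' = u1 \<or> x' \<in> out_nbrs E x" using O by simp
    then show False
    proof
      assume "x' = u1"
      then have r: "R E u1 1 u1" using ex' by simp
      show False using Cyc[OF b(10) r] k4 by simp
    next
      assume "x' \<in> out_nbrs E x"
      then have e2: "(x,x') \<in> E" by (simp add: out_nbrs_def)
      have r2: "R E u1 2 x'" using ex e2 by (simp add: numeral_eq_Suc) blast
      have r1: "R E u1 1 x'" using ex' by simp
      have "(2::nat) = 1" by (rule U1[OF b(10) r2 r1]) (use k4 in arith)+
      then show False by simp
    qed
  qed
  have uo: "u \<notin> outlier V E k v"
  proof
    assume "u \<in> outlier V E k v"
    then have "u = u1 \<or> u \<in> out_nbrs E x" using O by simp
    then show False
    proof
      assume "u = u1"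
      then have r: "R E u 1 u" using b(3) by simp
      show False using Cyc[OF b(1) r] k4 by simp
    next
      assume "u \<in> out_nbrs E x"
      then have e2: "(x,u) \<in> E" by (simp add: out_nbrs_def)
      have r: "R E u 3 u" using ex e2 b(3) by (simp add: numeral_eq_Suc) blast
      show False using Cyc[OF b(1) r] k4 by simp
    qed
  qed
  show False
  proof (cases "(v1,x') \<in> E")
    case True
    show False using Lfinal[OF c ox d(1) True d(2) uo] .
  next
    case False
    have d0': "R E v1 (k-1) x' \<and> u1 \<notin> T v1 (k-1)" by (rule deep[OF c ex' False x'o])
    have d': "R E v1 (k-1) x'" "u1 \<notin> T v1 (k-1)" using d0' by simp_all
    have O': "outlier V E k v = insert u1 (out_nbrs E x')" using Ldeep[OF c ex' d'] .
    have x'V: "x' \<in> V" using ex' R_V1 by auto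
    obtain w where w: "w \<in> out_nbrs E x'"
    proof -
      obtain a1 a2 where "out_nbrs E x' = {a1,a2}" using out2[OF x'V] by blast
      then show ?thesis using that by blast
    qed
    have "w \<noteq> u1"
    proof
      assume "w = u1"
      then have e2: "(x',u1) \<in> E" using w by (simp add: out_nbrs_def)
      have r: "R E u1 2 u1" using ex' e2 by (simp add: numeral_eq_Suc) blast
      show False using Cyc[OF b(10) r] k4 by simp
    qed
    moreover have "w \<in> outlier V E k v" using w O' by simp
    ultimately have "w \<in> out_nbrs E x" using O by simp
    then have "(x,w) \<in> E" by (simp add: out_nbrs_def)
    then have rx: "R E x 1 w" by simp
    have rx': "R E x' 1 w" using w by (simp add: out_nbrs_def)
    have "x = x'" by (rule U2[OF ex ex' rx rx']) (use k4 in arith)+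
    then show False using ox by simp
  qed
qed

end

theorem lemma6:
  fixes V :: "'a set" and E :: "('a \<times> 'a) set" and k :: nat
    and u v u1 u2 v1 u3 u4 v3 v4 :: 'a
  assumes "k \<ge> 4"
    and "digraph_2_k_plus3 V E k"
    and "u \<in> V" and "v \<in> V" and "u \<noteq> v"
    and "out_nbrs E u \<inter> out_nbrs E v = {u2}"
    and "out_nbrs E u = {u1, u2}"
    and "out_nbrs E v = {v1, u2}"
    and "out_nbrs E u1 = {u3, u4}"
    and "out_nbrs E v1 = {v3, v4}"
  shows "{u3, u4} \<subseteq> {v3, v4} \<union> outlier V E k v \<and>
         {v3, v4} \<subseteq> {u3, u4} \<union> outlier V E k u"
proof -
  interpret G V E k using assms(1,2) by unfold_locales
  have c: "cfg V E u v u1 v1 u2" using assms unfolding cfg_def by auto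
  have c': "cfg V E v u v1 u1 u2" using cfg_sym[OF c] .
  have 1: "x \<in> {v3,v4} \<union> outlier V E k v" if "x \<in> {u3,u4}" for x
  proof -
    have ex: "(u1,x) \<in> E" using that assms(9) by (auto simp: out_nbrs_def)
    show ?thesis
    proof (cases "(v1,x) \<in> E")
      case True then show ?thesis using assms(10) by (auto simp: out_nbrs_def)
    next
      case False then show ?thesis using core[OF c ex False] by blast
    qed
  qed
  have 2: "x \<in> {u3,u4} \<union> outlier V E k u" if "x \<in> {v3,v4}" for x
  proof -
    have ex: "(v1,x) \<in> E" using that assms(10) by (auto simp: out_nbrs_def)
    show ?thesis
    proof (cases "(u1,x) \<in> E")
      case True then show ?thesis using assms(9) by (auto simp: out_nbrs_def)
    next
      case False then show ?thesis using core[OF c' ex False] by blast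
    qed
  qed
  show ?thesis using 1 2 by blast
qed



end
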